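(* Let $G$ be a strongly observable directed graph on $K$ vertices with independence number $\alpha$. The set $D$ returned by the procedure OODS (described in the context) on input $G$ satisfies $|D|\le\lceil\alpha(1+2\ln(K/\alpha))\rceil$. Moreover, if $G$ is acyclic or undirected, then $|D|\le\alpha$.
   Context: A directed graph $G=([K],E)$ (self-loops allowed) is strongly observable if every vertex either has a self-loop or has incoming edges from all other vertices. The independence number $\alpha$ is the maximum size of a set of vertices no two distinct members of which are joined by an edge (in either direction). An undirected graph is treated as the directed graph with both orientations of each edge. A "no-root vertex" is a vertex with no incoming edges other than its self-loop. The out-neighbors of a vertex $u$ are the vertices $w$ with $(u,w)\in E$; the out-degree is their number. Procedure OODS: start with $D=\emptyset$. While $G$ is nonempty: if $G$ (currently) is acyclic, add all no-root vertices to $D$ and remove them and their out-neighbors from $G$; otherwise, select a vertex of largest out-degree in $G$, add it to $D$, and remove it and its out-neighbors from $G$. Return $D$. *)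

theory Defs
  imports Complex_Main
begin

text \<open>The "current graph" during OODS is the subgraph of \<open>E\<close> induced by the set \<open>V\<close> of remaining vertices.\<close>

definition digraph_on :: "nat \<Rightarrow> (nat \<times> nat) set \<Rightarrow> bool" where
  "digraph_on K E \<longleftrightarrow> E \<subseteq> {0..<K} \<times> {0..<K}"

definition strongly_observable :: "nat \<Rightarrow> (nat \<times> nat) set \<Rightarrow> bool" where
  "strongly_observable K E \<longleftrightarrow>
     (\<forall>v\<in>{0..<K}. (v, v) \<in> E \<or> (\<forall>u\<in>{0..<K}. u \<noteq> v \<longrightarrow> (u, v) \<in> E))"

definition independent_set :: "(nat \<times> nat) set \<Rightarrow> nat set \<Rightarrow> bool" where
  "independent_set E S \<longleftrightarrow> (\<forall>u\<in>S. \<forall>v\<in>S. u \<noteq> v \<longrightarrow> (u, v) \<notin> E)"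

definition independence_number :: "nat \<Rightarrow> (nat \<times> nat) set \<Rightarrow> nat" where
  "independence_number K E = Max {card S | S. S \<subseteq> {0..<K} \<and> independent_set E S}"

definition acyclic_on :: "(nat \<times> nat) set \<Rightarrow> nat set \<Rightarrow> bool" where
  "acyclic_on E V \<longleftrightarrow> acyclic {(u, w). u \<in> V \<and> w \<in> V \<and> u \<noteq> w \<and> (u, w) \<in> E}"

definition no_roots :: "(nat \<times> nat) set \<Rightarrow> nat set \<Rightarrow> nat set" where
  "no_roots E V = {v \<in> V. \<forall>u\<in>V. u \<noteq> v \<longrightarrow> (u, v) \<notin> E}"

definition out_nbrs :: "(nat \<times> nat) set \<Rightarrow> nat set \<Rightarrow> nat \<Rightarrow> nat set" where
  "out_nbrs E V u = {w \<in> V. (u, w) \<in> E}"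

definition out_deg :: "(nat \<times> nat) set \<Rightarrow> nat set \<Rightarrow> nat \<Rightarrow> nat" where
  "out_deg E V u = card (out_nbrs E V u)"

text \<open>\<open>oods_run E V D\<close>: running OODS on the subgraph induced by \<open>V\<close> can return \<open>D\<close>
  (any tie-breaking in the choice of a vertex of largest out-degree).\<close>
inductive oods_run :: "(nat \<times> nat) set \<Rightarrow> nat set \<Rightarrow> nat set \<Rightarrow> bool" for E where
  empty: "oods_run E {} {}"
| acyc: "\<lbrakk> V \<noteq> {}; acyclic_on E V;
           oods_run E (V - (no_roots E V \<union> (\<Union>v\<in>no_roots E V. out_nbrs E V v))) D \<rbrakk>
         \<Longrightarrow> oods_run E V (no_roots E V \<union> D)"
| greedy: "\<lbrakk> V \<noteq> {}; \<not> acyclic_on E V; u \<in> V; \<forall>w\<in>V. out_deg E V w \<le> out_deg E V u;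
             oods_run E (V - ({u} \<union> out_nbrs E V u)) D \<rbrakk>
         \<Longrightarrow> oods_run E V (insert u D)"

end

theory Submission imports Defs begin

lemma card_ind:
  assumes "finite V"
  shows "card {x\<in>V. P x} = (\<Sum>x\<in>V. if P x then 1 else 0::nat)"
proof -
  have "card {x\<in>V. P x} = (\<Sum>x\<in>{x\<in>V. P x}. 1::nat)" by (rule card_eq_sum)
  also have "\<dots> = (\<Sum>x\<in>V. if P x then 1 else 0)" by (rule sum.inter_filter[OF assms])
  finally show ?thesis .
qed

lemma sum_card_swap:
  assumes fin: "finite V"
  shows "(\<Sum>w\<in>V. card {x\<in>V. P w x}) = (\<Sum>x\<in>V. card {w\<in>V. P w x})"
proof -
  have "(\<Sum>w\<in>V. card {x\<in>V. P w x}) = (\<Sum>w\<in>V. \<Sum>x\<in>V. if P w x then 1 else 0)"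
    using fin by (simp add: card_ind)
  also have "\<dots> = (\<Sum>x\<in>V. \<Sum>w\<in>V. if P w x then 1 else 0)" by (rule sum.swap)
  also have "\<dots> = (\<Sum>x\<in>V. card {w\<in>V. P w x})" using fin by (simp add: card_ind)
  finally show ?thesis .
qed

lemma turan_arith_real:
  fixes x m b sn sr :: real
  assumes "0 \<le> b" "x*x \<le> sn" "m*m \<le> b*sr" "0 \<le> m" "m \<le> sr" "0 \<le> x"
  shows "(x+m)*(x+m) \<le> (b+1)*(sn+sr)"
proof -
  have key: "2*x*m \<le> b*x*x + sr"
  proof (cases "b = 0")
    case True
    then have "m*m \<le> 0" using assms(3) by simp
    moreover have "0 \<le> m*m" by simp
    ultimately have "m*m = 0" by linarith
    then have "m = 0" by simp
    then show ?thesis using assms(5) True by simp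
  next
    case False
    then have bp: "0 < b" using assms(1) by simp
    have e: "(b*x - m)*(b*x - m) = b*b*x*x - 2*b*x*m + m*m" by (simp add: algebra_simps)
    have "0 \<le> (b*x - m)*(b*x - m)" by simp
    then have "2*b*x*m \<le> b*b*x*x + m*m" using e by linarith
    also have "\<dots> \<le> b*b*x*x + b*sr" using assms(3) by linarith
    finally have "b*(2*x*m) \<le> b*(b*x*x + sr)" by (simp add: algebra_simps)
    then show ?thesis using bp mult_le_cancel_left_pos by blast
  qed
  have "(x+m)*(x+m) = x*x + 2*x*m + m*m" by (simp add: algebra_simps)
  also have "\<dots> \<le> x*x + b*x*x + sr + b*sr" using key assms(3) by linarith
  also have "\<dots> = (b+1)*(x*x+sr)" by (simp add: algebra_simps)
  also have "\<dots> \<le> (b+1)*(sn+sr)" using assms by (intro mult_left_mono) auto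
  finally show ?thesis .
qed

lemma turan_arith:
  fixes x m b sn sr :: nat
  assumes "x * x \<le> sn" "m^2 \<le> b * sr" "m \<le> sr"
  shows "(x + m)^2 \<le> Suc b * (sn + sr)"
proof -
  have a1: "real x * real x \<le> real sn" using assms(1) by (metis of_nat_le_iff of_nat_mult)
  have a2: "real m * real m \<le> real b * real sr" using assms(2) by (metis of_nat_le_iff of_nat_mult power2_eq_square)
  have a3: "real m \<le> real sr" using assms(3) by simp
  have "(real x + real m) * (real x + real m) \<le> (real b + 1) * (real sn + real sr)"
    by (rule turan_arith_real) (use a1 a2 a3 in auto)
  moreover have "real ((x+m)*(x+m)) = (real x + real m)*(real x + real m)" by simp
  moreover have "real (Suc b*(sn+sr)) = (real b+1)*(real sn+real sr)" by (simp add: algebra_simps)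
  ultimately have "real ((x+m)*(x+m)) \<le> real (Suc b * (sn + sr))" by simp
  then show ?thesis by (simp only: of_nat_le_iff power2_eq_square)
qed

lemma turan:
  fixes A :: "'a \<Rightarrow> 'a \<Rightarrow> bool" and a :: nat
  assumes sym: "\<And>x y. A x y \<Longrightarrow> A y x" and irr: "\<And>x. \<not> A x x"
  shows "finite V \<Longrightarrow> (\<And>S. S \<subseteq> V \<Longrightarrow> (\<forall>x\<in>S. \<forall>y\<in>S. \<not> A x y) \<Longrightarrow> card S \<le> a)
     \<Longrightarrow> (card V)^2 \<le> a * (\<Sum>v\<in>V. card {w\<in>V. A v w} + 1)"
proof (induction a arbitrary: V)
  case 0
  have "V = {}"
  proof (rule ccontr)
    assume "V \<noteq> {}" then obtain v where "v\<in>V" by blast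
    then have "card {v} \<le> 0" using 0(2)[of "{v}"] irr by auto
    then show False by simp
  qed
  then show ?case by simp
next
  case (Suc b)
  show ?case
  proof (cases "V = {}")
    case True then show ?thesis by simp
  next
    case False
    define deg where "deg = (\<lambda>U v. card {w\<in>U. A v w})"
    obtain v0 where "v0 \<in> V" using False by blast
    obtain v where v: "v \<in> V" "\<And>w. w\<in>V \<Longrightarrow> deg V v \<le> deg V w"
      using ex_has_least_nat[of "\<lambda>x. x\<in>V" v0 "deg V"] \<open>v0 \<in> V\<close> by blast
    define N where "N = insert v {w\<in>V. A v w}"
    define R where "R = V - N"
    have fin: "finite V" by fact
    have NV: "N \<subseteq> V" using v by (auto simp: N_def)
    have cardN: "card N = deg V v + 1" using irr fin by (simp add: N_def deg_def)
    have finR: "finite R" using fin by (simp add: R_def)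
    have indR: "card S \<le> b" if S: "S \<subseteq> R" "\<forall>x\<in>S. \<forall>y\<in>S. \<not> A x y" for S
    proof -
      have vS: "v \<notin> S" using S(1) by (auto simp: R_def N_def)
      have ins: "insert v S \<subseteq> V" using S(1) v(1) by (auto simp: R_def)
      have nv: "\<not> A v y \<and> \<not> A y v" if "y \<in> S" for y
      proof -
        have "y \<in> V" "y \<notin> N" using that S(1) by (auto simp: R_def)
        then have "\<not> A v y" by (auto simp: N_def)
        then show ?thesis using sym by blast
      qed
      have indep: "\<forall>x\<in>insert v S. \<forall>y\<in>insert v S. \<not> A x y"
      proof (intro ballI)
        fix x y assume x: "x \<in> insert v S" and y: "y \<in> insert v S"
        show "\<not> A x y"
        proof (cases "x = v")
          case xv: True
          show ?thesis
          proof (cases "y = v")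
            case True then show ?thesis using xv irr by simp
          next
            case False then have "y \<in> S" using y by simp
            then show ?thesis using nv xv by simp
          qed
        next
          case False then have xS: "x \<in> S" using x by simp
          show ?thesis
          proof (cases "y = v")
            case True then show ?thesis using nv[OF xS] by simp
          next
            case False then have "y \<in> S" using y by simp
            then show ?thesis using S(2) xS by simp
          qed
        qed
      qed
      have "card (insert v S) \<le> Suc b" by (rule Suc.prems(2)[OF ins indep])
      moreover have "finite S" using S(1) finR finite_subset by blast
      ultimately show "card S \<le> b" using vS by simp
    qed
    have IH: "(card R)^2 \<le> b * (\<Sum>w\<in>R. deg R w + 1)" using Suc.IH[OF finR indR] by (simp add: deg_def)
    have degmono: "deg R w \<le> deg V w" for w unfolding deg_def R_def by (rule card_mono) (auto simp: fin)
    define SR where "SR = (\<Sum>w\<in>R. deg V w + 1)"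
    have "(\<Sum>w\<in>R. deg R w + 1) \<le> SR" unfolding SR_def by (rule sum_mono) (simp add: degmono)
    then have SR1: "(card R)^2 \<le> b * SR" using IH by (meson le_trans mult_le_mono2)
    have SR2: "card R \<le> SR" unfolding SR_def card_eq_sum by (rule sum_mono) simp
    have SN: "(deg V v + 1) * (deg V v + 1) \<le> (\<Sum>w\<in>N. deg V w + 1)"
    proof -
      have "card N * (deg V v + 1) \<le> (\<Sum>w\<in>N. deg V w + 1)"
        using sum_bounded_below[of N "deg V v + 1" "\<lambda>w. deg V w + 1"] v(2) NV by auto
      then show ?thesis using cardN by simp
    qed
    have finN: "finite N" using NV fin finite_subset by blast
    have split: "(\<Sum>w\<in>V. deg V w + 1) = (\<Sum>w\<in>N. deg V w + 1) + SR"
    proof -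
      have VN: "N \<union> (V - N) = V" using NV by blast
      have "(\<Sum>w\<in>N \<union> (V-N). deg V w + 1) = (\<Sum>w\<in>N. deg V w + 1) + (\<Sum>w\<in>V-N. deg V w + 1)"
        by (rule sum.union_disjoint) (use fin finN in auto)
      then show ?thesis unfolding VN SR_def R_def .
    qed
    have cardV: "card V = card N + card R"
      unfolding R_def using card_Diff_subset[OF finite_subset[OF NV fin] NV] card_mono[OF fin NV] by simp
    have "(card V)^2 \<le> Suc b * ((\<Sum>w\<in>N. deg V w + 1) + SR)"
      unfolding cardV cardN using turan_arith[OF SN SR1 SR2] by simp
    then show ?thesis using split by (simp add: deg_def)
  qed
qed

lemma alpha_fin: "finite {card S | S. S \<subseteq> {0..<K} \<and> independent_set E S}"
  by (rule finite_subset[of _ "card ` Pow {0..<K}"]) auto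
lemma ne: "{card S | S. S \<subseteq> {0..<K} \<and> independent_set E S} \<noteq> {}"
proof -
  have "card {} \<in> {card S | S. S \<subseteq> {0..<K} \<and> independent_set E S}"
    by (intro CollectI exI[of _ "{}"]) (simp add: independent_set_def)
  then show ?thesis by blast
qed
lemma alpha_le: "independence_number K E \<le> K"
proof -
  have "independence_number K E \<in> {card S | S. S \<subseteq> {0..<K} \<and> independent_set E S}"
    unfolding independence_number_def by (rule Max_in[OF alpha_fin ne])
  then obtain S where S: "independence_number K E = card S" "S \<subseteq> {0..<K}" by blast
  show ?thesis using S card_mono[of "{0..<K}" S] by simp
qed

lemma alpha_ge: "S \<subseteq> {0..<K} \<Longrightarrow> independent_set E S \<Longrightarrow> card S \<le> independence_number K E"
  unfolding independence_number_def by (rule Max_ge[OF alpha_fin]) blast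

lemma alpha_pos: "v < K \<Longrightarrow> 1 \<le> independence_number K E"
  using alpha_ge[of "{v}" K E] by (simp add: independent_set_def)

lemma outdeg_sum:
  fixes V :: "nat set" and a :: nat
  assumes fin: "finite V" and n2: "2 \<le> card V"
    and so: "\<forall>v\<in>V. (v,v)\<in>E \<or> (\<forall>u\<in>V. u\<noteq>v \<longrightarrow> (u,v)\<in>E)"
    and ind: "\<And>S. S\<subseteq>V \<Longrightarrow> independent_set E S \<Longrightarrow> card S \<le> a" and a1: "1 \<le> a"
  shows "(card V)^2 \<le> 2*a*(\<Sum>w\<in>V. out_deg E V w)"
proof -
  define A where "A = (\<lambda>w x. w \<noteq> x \<and> ((w,x)\<in>E \<or> (x,w)\<in>E))"
  define n where "n = card V"
  have symA: "\<And>x y. A x y \<Longrightarrow> A y x" unfolding A_def by blast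
  have irrA: "\<And>x. \<not> A x x" unfolding A_def by blast
  have indA: "card S \<le> a" if S: "S \<subseteq> V" "\<forall>x\<in>S. \<forall>y\<in>S. \<not> A x y" for S
  proof -
    have "independent_set E S" unfolding independent_set_def
    proof (intro ballI impI)
      fix x y assume xy: "x\<in>S" "y\<in>S" "x\<noteq>y"
      then have "\<not> A x y" using S(2) by blast
      then show "(x,y) \<notin> E" using xy(3) by (simp add: A_def)
    qed
    then show ?thesis by (rule ind[OF S(1)])
  qed
  have tur: "n^2 \<le> a * (\<Sum>v\<in>V. card {w\<in>V. A v w} + 1)"
    unfolding n_def by (rule turan[OF symA irrA fin indA])
  define S where "S = (\<Sum>w\<in>V. card {x\<in>V. w\<noteq>x \<and> (w,x)\<in>E})"
  have Sin: "S = (\<Sum>x\<in>V. card {w\<in>V. w\<noteq>x \<and> (w,x)\<in>E})" unfolding S_def by (rule sum_card_swap[OF fin])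
  have D: "(\<Sum>v\<in>V. card {w\<in>V. A v w}) \<le> 2*S"
  proof -
    have "card {w\<in>V. A v w} \<le> card {x\<in>V. v\<noteq>x \<and> (v,x)\<in>E} + card {w\<in>V. w\<noteq>v \<and> (w,v)\<in>E}" for v
    proof -
      have eq: "{w\<in>V. A v w} = {x\<in>V. v\<noteq>x \<and> (v,x)\<in>E} \<union> {w\<in>V. w\<noteq>v \<and> (w,v)\<in>E}" by (auto simp: A_def)
      show ?thesis unfolding eq by (rule card_Un_le)
    qed
    then have "(\<Sum>v\<in>V. card {w\<in>V. A v w}) \<le> (\<Sum>v\<in>V. card {x\<in>V. v\<noteq>x \<and> (v,x)\<in>E} + card {w\<in>V. w\<noteq>v \<and> (w,v)\<in>E})"
      by (rule sum_mono)
    also have "\<dots> = (\<Sum>v\<in>V. card {x\<in>V. v\<noteq>x \<and> (v,x)\<in>E}) + (\<Sum>v\<in>V. card {w\<in>V. w\<noteq>v \<and> (w,v)\<in>E})"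
      by (rule sum.distrib)
    also have "\<dots> = S + S" by (simp only: S_def[symmetric] Sin[symmetric])
    also have "\<dots> = 2*S" by simp
    finally show ?thesis .
  qed
  define c where "c = (\<Sum>w\<in>V. if (w,w)\<in>E then 1 else 0::nat)"
  define l where "l = (\<Sum>w\<in>V. if (w,w)\<in>E then 0 else 1::nat)"
  have cl: "c + l = n"
  proof -
    have "c + l = (\<Sum>w\<in>V. (if (w,w)\<in>E then 1 else 0) + (if (w,w)\<in>E then 0 else 1::nat))"
      unfolding c_def l_def by (simp add: sum.distrib)
    also have "\<dots> = (\<Sum>w\<in>V. 1)" by (rule sum.cong) auto
    finally show ?thesis by (simp add: n_def)
  qed
  have T: "(\<Sum>w\<in>V. out_deg E V w) = S + c"
  proof -
    have "out_deg E V w = card {x\<in>V. w\<noteq>x \<and> (w,x)\<in>E} + (if (w,w)\<in>E then 1 else 0)" if "w\<in>V" for w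
    proof (cases "(w,w)\<in>E")
      case True
      then have "out_nbrs E V w = insert w {x\<in>V. w\<noteq>x \<and> (w,x)\<in>E}" using that by (auto simp: out_nbrs_def)
      then show ?thesis using True fin by (simp add: out_deg_def)
    next
      case False
      then have "out_nbrs E V w = {x\<in>V. w\<noteq>x \<and> (w,x)\<in>E}" by (auto simp: out_nbrs_def)
      then show ?thesis using False by (simp add: out_deg_def)
    qed
    then have "(\<Sum>w\<in>V. out_deg E V w) = (\<Sum>w\<in>V. card {x\<in>V. w\<noteq>x \<and> (w,x)\<in>E} + (if (w,w)\<in>E then 1 else 0))"
      by (rule sum.cong[OF refl])
    then show ?thesis unfolding S_def c_def by (simp add: sum.distrib)
  qed
  have Sl: "l*(n-1) \<le> S"
  proof -
    have "(if (x,x)\<in>E then 0 else 1)*(n-1) \<le> card {w\<in>V. w\<noteq>x \<and> (w,x)\<in>E}" if "x\<in>V" for x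
    proof (cases "(x,x)\<in>E")
      case False
      then have "{w\<in>V. w\<noteq>x \<and> (w,x)\<in>E} = V - {x}" using so that by auto
      then show ?thesis using False that fin by (simp add: n_def)
    qed simp
    then have "(\<Sum>x\<in>V. (if (x,x)\<in>E then 0 else 1)*(n-1)) \<le> S" unfolding Sin by (rule sum_mono)
    then show ?thesis by (simp add: l_def sum_distrib_right)
  qed
  have tur2: "n^2 \<le> a*(2*S + n)"
  proof -
    have "(\<Sum>v\<in>V. card {w\<in>V. A v w} + 1) = (\<Sum>v\<in>V. card {w\<in>V. A v w}) + (\<Sum>v\<in>V. 1)"
      by (rule sum.distrib)
    also have "(\<Sum>v\<in>V. 1::nat) = n" by (simp add: n_def)
    finally have eq: "(\<Sum>v\<in>V. card {w\<in>V. A v w} + 1) = (\<Sum>v\<in>V. card {w\<in>V. A v w}) + n" .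
    have t1: "n^2 \<le> a * ((\<Sum>v\<in>V. card {w\<in>V. A v w}) + n)" using tur unfolding eq .
    have "(\<Sum>v\<in>V. card {w\<in>V. A v w}) + n \<le> 2*S + n" using D by (rule add_right_mono)
    then have "a * ((\<Sum>v\<in>V. card {w\<in>V. A v w}) + n) \<le> a * (2*S + n)" by (rule mult_le_mono2)
    with t1 show ?thesis by (rule le_trans)
  qed
  have nn: "2 \<le> n" using n2 by (simp add: n_def)
  have "n^2 \<le> 2*a*(S + c)"
  proof (cases "2*l \<le> n")
    case True
    then have "2*S + n \<le> 2*(S+c)" using cl by presburger
    then have "a*(2*S+n) \<le> a*(2*(S+c))" by (rule mult_le_mono2)
    also have "a*(2*(S+c)) = 2*a*(S+c)" by (simp add: ac_simps)
    finally have "a*(2*S+n) \<le> 2*a*(S+c)" .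
    then show ?thesis using tur2 by linarith
  next
    case False
    have h1: "real n * (real n - 2) \<le> 2*real l*(real n - 2)" using False nn by (intro mult_right_mono) auto
    have h1': "real n*real n - 2*real n \<le> 2*real l*real n - 4*real l" using h1 by (simp add: algebra_simps)
    have rc: "real c = real n - real l" using cl by (simp flip: of_nat_add)
    have h2: "real (l*(n-1)) = real l*real n - real l" using nn by (simp add: of_nat_diff algebra_simps)
    have h3: "real (2*(l*(n-1)+c)) = 2*(real l*real n - real l) + 2*(real n - real l)"
    proof -
      have g: "real (2*(X+c)) = 2*(real X + real c)" for X by simp
      show ?thesis unfolding g[of "l*(n-1)"] h2 rc by (simp only: distrib_left)
    qed
    have "real (n^2) \<le> real (2*(l*(n-1)+c))" unfolding h3 using h1' by (simp add: power2_eq_square)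
    then have "n^2 \<le> 2*(l*(n-1) + c)" by (simp only: of_nat_le_iff)
    also have "\<dots> \<le> 2*(S+c)" using Sl by simp
    also have "\<dots> \<le> a*(2*(S+c))" using mult_le_mono1[OF a1, of "2*(S+c)"] by simp
    also have "\<dots> = 2*a*(S+c)" by (simp add: ac_simps)
    finally show ?thesis .
  qed
  then show ?thesis using T by (simp add: n_def)
qed


lemma run_subset: "oods_run E V D \<Longrightarrow> D \<subseteq> V"
  by (induction rule: oods_run.induct) (auto simp: no_roots_def)

lemma acyclic_on_mono: "acyclic_on E V \<Longrightarrow> W \<subseteq> V \<Longrightarrow> acyclic_on E W"
  unfolding acyclic_on_def by (erule acyclic_subset) auto

lemma run_indep: "oods_run E V D \<Longrightarrow> acyclic_on E V \<or> sym E \<Longrightarrow> independent_set E D"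
proof (induction rule: oods_run.induct)
  case empty then show ?case by (simp add: independent_set_def)
next
  case (acyc V D)
  let ?N = "no_roots E V"
  let ?V' = "V - (?N \<union> (\<Union>v\<in>?N. out_nbrs E V v))"
  have "acyclic_on E ?V'" using acyclic_on_mono[OF acyc(2)] by blast
  then have iD: "independent_set E D" using acyc.IH by blast
  have DV: "D \<subseteq> ?V'" using run_subset[OF acyc(3)] .
  show ?case unfolding independent_set_def
  proof (intro ballI impI)
    fix x y assume x: "x \<in> ?N \<union> D" and y: "y \<in> ?N \<union> D" and xy: "x \<noteq> y"
    have xV: "x \<in> V" using x DV by (auto simp: no_roots_def)
    show "(x,y) \<notin> E"
    proof (cases "y \<in> ?N")
      case True then show ?thesis using xV xy by (auto simp: no_roots_def)
    next
      case False
      then have yD: "y \<in> D" using y by blast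
      show ?thesis
      proof (cases "x \<in> ?N")
        case True
        then have "y \<notin> out_nbrs E V x" using yD DV by blast
        then show ?thesis using yD DV by (auto simp: out_nbrs_def)
      next
        case False
        then have "x \<in> D" using x by blast
        then show ?thesis using yD iD xy by (auto simp: independent_set_def)
      qed
    qed
  qed
next
  case (greedy V u D)
  then have s: "sym E" by blast
  have iD: "independent_set E D" using greedy.IH s by blast
  have DV: "D \<subseteq> V - ({u} \<union> out_nbrs E V u)" using run_subset[OF greedy(5)] .
  have "(u,d) \<notin> E \<and> (d,u) \<notin> E" if "d \<in> D" for d
  proof -
    have "(u,d) \<notin> E" using that DV by (auto simp: out_nbrs_def)
    then show ?thesis using s by (auto dest: symD)
  qed
  then show ?case using iD unfolding independent_set_def by blast
qed

lemma ln_step: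
  fixes n n' al r :: real
  assumes "0 < n'" "n' = n - r" "n \<le> 2*al*r" "1 \<le> al" "0 \<le> r"
  shows "1 \<le> 2*al*(ln n - ln n')"
proof -
  have n0: "0 < n" using assms by linarith
  have "n'/n \<le> 1 - 1/(2*al)"
  proof -
    have "r/n \<ge> 1/(2*al)" using assms n0 by (simp add: field_simps)
    moreover have "n'/n = 1 - r/n" using assms n0 by (simp add: field_simps)
    ultimately show ?thesis by linarith
  qed
  moreover have "ln (n'/n) \<le> n'/n - 1" using assms n0 by (intro ln_le_minus_one) simp
  moreover have "ln (n'/n) = ln n' - ln n" using assms n0 by (simp add: ln_div)
  ultimately have "1/(2*al) \<le> ln n - ln n'" by linarith
  then show ?thesis using assms(4) by (simp add: field_simps)
qed

lemma run_bound:
  assumes so: "strongly_observable K E"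
  shows "oods_run E V D \<Longrightarrow> V \<subseteq> {0..<K} \<Longrightarrow> independence_number K E < card V \<Longrightarrow>
     real (card D) < real (independence_number K E) + 2*real (independence_number K E) * ln (real (card V) / real (independence_number K E)) + 1"
proof (induction rule: oods_run.induct)
  case empty then show ?case by simp
next
  case (acyc V D)
  define al where "al = independence_number K E"
  have run: "oods_run E V (no_roots E V \<union> D)" using oods_run.acyc[OF acyc(1,2,3)] .
  have "independent_set E (no_roots E V \<union> D)" using run_indep[OF run] acyc(2) by blast
  moreover have "no_roots E V \<union> D \<subseteq> {0..<K}" using run_subset[OF run] acyc.prems by blast
  ultimately have c: "card (no_roots E V \<union> D) \<le> al" unfolding al_def by (intro alpha_ge)
  have "0 \<le> real al * ln (real (card V) / real al)"
  proof (cases "al = 0")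
    case False
    then have "1 \<le> real (card V) / real al" using acyc.prems(2) by (simp add: al_def field_simps)
    then show ?thesis by simp
  qed simp
  then show ?case using c unfolding al_def by linarith
next
  case (greedy V u D)
  define al where "al = independence_number K E"
  define R where "R = {u} \<union> out_nbrs E V u"
  define V' where "V' = V - R"
  have fin: "finite V" using greedy.prems(1) finite_subset by blast
  have RV: "R \<subseteq> V" using greedy(3) by (auto simp: R_def out_nbrs_def)
  have finR: "finite R" using RV fin finite_subset by blast
  have cardV': "card V' = card V - card R" unfolding V'_def using card_Diff_subset[OF finR RV] .
  have RleV: "card R \<le> card V" using card_mono[OF fin RV] .
  have "R \<noteq> {}" by (simp add: R_def)
  then have "0 < card R" using finR by (simp add: card_gt_0_iff)
  then have R1: "1 \<le> card R" by simp
  have al1: "1 \<le> al" unfolding al_def using alpha_pos greedy(3) greedy.prems(1) by auto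
  have key: "real (card V) \<le> 2 * real al * real (card R)"
  proof (cases "card V \<le> 1")
    case True
    have "1 \<le> al * card R" using R1 al1 by (metis mult_le_mono nat_mult_1)
    then have "1 \<le> real al * real (card R)" by (metis of_nat_1 of_nat_le_iff of_nat_mult)
    moreover have "real (card V) \<le> 1" using True by simp
    ultimately show ?thesis by linarith
  next
    case False
    have so': "\<forall>v\<in>V. (v,v)\<in>E \<or> (\<forall>u\<in>V. u\<noteq>v \<longrightarrow> (u,v)\<in>E)"
      using so greedy.prems(1) unfolding strongly_observable_def by blast
    have ind: "card S \<le> al" if "S \<subseteq> V" "independent_set E S" for S
      unfolding al_def using that greedy.prems(1) by (intro alpha_ge) auto
    have "(card V)^2 \<le> 2*al*(\<Sum>w\<in>V. out_deg E V w)"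
      using outdeg_sum[OF fin _ so' ind al1] False by simp
    also have "(\<Sum>w\<in>V. out_deg E V w) \<le> card V * out_deg E V u"
      using sum_bounded_above[of V "\<lambda>w. out_deg E V w" "out_deg E V u"] greedy(4) by simp
    also have "out_deg E V u \<le> card R" unfolding out_deg_def R_def by (rule card_mono) (use finR in \<open>auto simp: R_def\<close>)
    finally have "card V * card V \<le> card V * (2*al*card R)"
      by (simp add: power2_eq_square algebra_simps mult_le_mono2)
    then have "card V \<le> 2*al*card R" using False by simp
    then show ?thesis by (metis of_nat_le_iff of_nat_mult of_nat_numeral)
  qed
  have DV: "D \<subseteq> V'" using run_subset[OF greedy(5)] unfolding V'_def R_def .
  have finV': "finite V'" using fin by (simp add: V'_def)
  have uD: "u \<notin> D" using DV by (auto simp: V'_def R_def)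
  have cD: "card (insert u D) = card D + 1" using uD finite_subset[OF DV finV'] by simp
  have cDV: "card D \<le> card V'" using card_mono[OF finV' DV] .
  have lnpos: "0 < ln (real (card V) / real al)"
    using greedy.prems(2) al1 unfolding al_def[symmetric] by (intro ln_gt_zero) (simp add: field_simps)
  have final: "real (card D + 1) < real al + 2 * real al * ln (real (card V) / real al) + 1"
  proof (cases "card V' \<le> al")
    case True
    then have cc: "real (card D) \<le> real al" using cDV by simp
    have "0 < real al * ln (real (card V) / real al)" using lnpos al1 by simp
    then show "real (card D + 1) < real al + 2 * real al * ln (real (card V) / real al) + 1"
      using cc by simp
  next
    case False
    have IH: "real (card D) < real al + 2*real al * ln (real (card V') / real al) + 1"
      using greedy.IH[of] greedy.prems(1) False unfolding V'_def R_def al_def by auto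
    have n'pos: "0 < real (card V')" using False by simp
    have stp: "1 \<le> 2*real al*(ln (real (card V)) - ln (real (card V')))"
      by (rule ln_step[OF n'pos _ key]) (use cardV' RleV al1 in auto)
    have e1: "ln (real (card V') / real al) = ln (real (card V')) - ln (real al)"
      using n'pos al1 by (simp add: ln_div)
    moreover have e2: "ln (real (card V) / real al) = ln (real (card V)) - ln (real al)"
      using n'pos al1 greedy.prems(2) by (simp add: ln_div)
    have e3: "2 * real al * ln (real (card V) / real al) = 2 * real al * ln (real (card V') / real al) + 2*real al*(ln (real (card V)) - ln (real (card V')))"
      unfolding e1 e2 by (simp add: algebra_simps)
    show "real (card D + 1) < real al + 2 * real al * ln (real (card V) / real al) + 1"
      using IH stp e3 by simp
  qed
  show ?case using final cD unfolding al_def by simp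
qed

theorem lemma24:
  fixes K :: nat and E :: "(nat \<times> nat) set" and D :: "nat set"
  assumes "digraph_on K E"
    and "strongly_observable K E"
    and "oods_run E {0..<K} D"
  shows "int (card D) \<le> \<lceil>real (independence_number K E) *
            (1 + 2 * ln (real K / real (independence_number K E)))\<rceil>
         \<and> ((acyclic_on E {0..<K} \<or> sym E) \<longrightarrow> card D \<le> independence_number K E)"
proof -
  define al where "al = independence_number K E"
  have DK: "D \<subseteq> {0..<K}" using run_subset[OF assms(3)] .
  have cDK: "card D \<le> K" using card_mono[OF _ DK] by simp
  have alK: "al \<le> K" unfolding al_def by (rule alpha_le)
  have P2: "(acyclic_on E {0..<K} \<or> sym E) \<longrightarrow> card D \<le> independence_number K E"
    using run_indep[OF assms(3)] alpha_ge[OF DK] by blast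
  have P1: "int (card D) \<le> \<lceil>real al * (1 + 2 * ln (real K / real al))\<rceil>"
  proof (cases "al < K")
    case True
    have "real (card D) < real al + 2*real al * ln (real K / real al) + 1"
      using run_bound[OF assms(2) assms(3)] True unfolding al_def by simp
    then have "of_int (int (card D) - 1) < real al * (1 + 2 * ln (real K / real al))"
      by (simp add: algebra_simps)
    then have "int (card D) - 1 < \<lceil>real al * (1 + 2 * ln (real K / real al))\<rceil>"
      by (simp only: less_ceiling_iff)
    then show ?thesis by linarith
  next
    case False
    then have "al = K" using alK by simp
    then show ?thesis using cDK by (cases "K = 0") simp_all
  qed
  show ?thesis using P1 P2 unfolding al_def by blast
qed

end
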